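(* Let $(X,d)$ be a hemi-metric space and $(E,\delta)$ a metric space. Let $T=(T_{ab})_{(a,b)\in E\times E}$ and $T'=(T'_{ab})_{(a,b)\in E\times E}$ be two families of self-maps of $X$ that are nonexpansive with respect to $d$. Suppose there exist $\epsilon\ge 0$ and $L>0$ such that for all $(a,b),(a',b')\in E\times E$ and all $x\in X$, \[ d^{\circ}(T_{ab}(x),T'_{a'b'}(x))\le L(\delta(a,a')+\delta(b,b'))+\epsilon. \] Then for all nonempty compact subsets $\mathcal{A},\mathcal{A}',\mathcal{B},\mathcal{B}'\subset E$, \[ |\rho(T,\mathcal{A},\mathcal{B})-\rho(T',\mathcal{A}',\mathcal{B}')|\le L\big(\delta_H(\mathcal{A},\mathcal{A}')+\delta_H(\mathcal{B},\mathcal{B}')\big)+\epsilon. \]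
   Context: A hemi-metric on a set $X$ is a map $d:X\times X\to\mathbb{R}$ satisfying $d(x,z)\le d(x,y)+d(y,z)$ for all $x,y,z$, and $d(x,y)=d(y,x)=0$ iff $x=y$ (it may take negative values). Its symmetrization $d^{\circ}(x,y)=\max(d(x,y),d(y,x))$ is a metric, and $X$ carries the topology of $d^{\circ}$. A map $T:X\to X$ is nonexpansive if $d(T(x),T(y))\le d(x,y)$ for all $x,y$. $\delta_H$ denotes the Hausdorff distance between compact subsets of $E$ induced by $\delta$. Escape rate game and its value: given nonempty compact action sets $\mathcal{A},\mathcal{B}$, a family of nonexpansive self-maps $T_{ab}$ of $X$, $(a,b)\in\mathcal{A}\times\mathcal{B}$, and an initial state $x_0\in X$, two players play infinitely many turns with perfect information: at turn $k\ge1$, player Min chooses $a_k\in\mathcal{A}$, then, having observed $a_k$, player Max chooses $b_k\in\mathcal{B}$, and the state becomes $x_k=T_{a_kb_k}(x_{k-1})$. A strategy of a player is a map assigning an action to each finite history of states and actions. For strategies $\sigma$ of Min and $\tau$ of Max, the payoff is the escape rate $J(\sigma,\tau)=\limsup_{k\to\infty}\frac1k d(x_k,x_0)$ (independent of $x_0$), which Min minimizes and Max maximizes. The game has value $\lambda\in\mathbb{R}$ if for every $\epsilon'>0$ there are strategies $\sigma^*,\tau^*$ with $J(\sigma^*,\tau)\le\lambda+\epsilon'$ and $J(\sigma,\tau^* )\ge\lambda-\epsilon'$ for all strategies $\sigma,\tau$. The value (competitive spectral radius) is denoted $\rho(T,\mathcal{A},\mathcal{B})$. Standing assumption (under which the value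 exists): for every $x\in X$ the maps $a\mapsto T_{ab}(x)$ and $b\mapsto T_{ab}(x)$ are continuous, and for every compact $K\subset X$ the set $\{T_{ab}(x):(a,b,x)\in\mathcal{A}\times\mathcal{B}\times K\}$ is compact; this is assumed for both families $T,T'$ and all the action sets considered. *)

theory Defs
  imports "HOL-Analysis.Analysis"
begin

definition hemi_metric :: "('x \<Rightarrow> 'x \<Rightarrow> real) \<Rightarrow> bool" where
  "hemi_metric d \<longleftrightarrow>
     (\<forall>x y z. d x z \<le> d x y + d y z) \<and>
     (\<forall>x y. (d x y = 0 \<and> d y x = 0) \<longleftrightarrow> x = y)"

definition dsym :: "('x \<Rightarrow> 'x \<Rightarrow> real) \<Rightarrow> 'x \<Rightarrow> 'x \<Rightarrow> real" where
  "dsym d x y = max (d x y) (d y x)"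

definition hemi_topology :: "('x \<Rightarrow> 'x \<Rightarrow> real) \<Rightarrow> 'x topology" where
  "hemi_topology d = Metric_space.mtopology UNIV (dsym d)"

definition nonexpansive_family :: "('x \<Rightarrow> 'x \<Rightarrow> real) \<Rightarrow> ('e \<Rightarrow> 'e \<Rightarrow> 'x \<Rightarrow> 'x) \<Rightarrow> bool" where
  "nonexpansive_family d T \<longleftrightarrow> (\<forall>a b x y. d (T a b x) (T a b y) \<le> d x y)"

definition hausdorff_dist :: "'e::metric_space set \<Rightarrow> 'e set \<Rightarrow> real" where
  "hausdorff_dist A B = max (SUP a\<in>A. infdist a B) (SUP b\<in>B. infdist b A)"

text \<open>A history at the beginning of turn k+1 consists of the states x_0,...,x_k,
  Min's actions a_1,...,a_k and Max's actions b_1,...,b_k.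
  A strategy of Min maps such a history to an action; a strategy of Max maps
  such a history together with Min's current action (appended to the list of
  Min's actions) to an action.\<close>

type_synonym ('x,'e) strategy = "'x list \<Rightarrow> 'e list \<Rightarrow> 'e list \<Rightarrow> 'e"

definition strategies :: "'e set \<Rightarrow> ('x,'e) strategy set" where
  "strategies A = {s. \<forall>xs as bs. s xs as bs \<in> A}"

fun play :: "('e \<Rightarrow> 'e \<Rightarrow> 'x \<Rightarrow> 'x) \<Rightarrow> ('x,'e) strategy \<Rightarrow> ('x,'e) strategy \<Rightarrow> 'x \<Rightarrow> nat
              \<Rightarrow> 'x list \<times> 'e list \<times> 'e list" where
  "play T \<sigma> \<tau> x0 0 = ([x0], [], [])"
| "play T \<sigma> \<tau> x0 (Suc k) =
     (let (xs, as, bs) = play T \<sigma> \<tau> x0 k;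
          a = \<sigma> xs as bs;
          b = \<tau> xs (as @ [a]) bs
      in (xs @ [T a b (last xs)], as @ [a], bs @ [b]))"

definition state :: "('e \<Rightarrow> 'e \<Rightarrow> 'x \<Rightarrow> 'x) \<Rightarrow> ('x,'e) strategy \<Rightarrow> ('x,'e) strategy \<Rightarrow> 'x \<Rightarrow> nat \<Rightarrow> 'x" where
  "state T \<sigma> \<tau> x0 k = last (fst (play T \<sigma> \<tau> x0 k))"

definition escape_rate :: "('x \<Rightarrow> 'x \<Rightarrow> real) \<Rightarrow> ('e \<Rightarrow> 'e \<Rightarrow> 'x \<Rightarrow> 'x) \<Rightarrow> ('x,'e) strategy \<Rightarrow> ('x,'e) strategy \<Rightarrow> 'x \<Rightarrow> ereal" where
  "escape_rate d T \<sigma> \<tau> x0 = limsup (\<lambda>k. ereal (d (state T \<sigma> \<tau> x0 k) x0 / real k))"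

definition game_has_value :: "('x \<Rightarrow> 'x \<Rightarrow> real) \<Rightarrow> ('e \<Rightarrow> 'e \<Rightarrow> 'x \<Rightarrow> 'x) \<Rightarrow> 'e set \<Rightarrow> 'e set \<Rightarrow> 'x \<Rightarrow> real \<Rightarrow> bool" where
  "game_has_value d T A B x0 r \<longleftrightarrow>
     (\<forall>\<epsilon>>0. \<exists>\<sigma>s\<in>strategies A. \<exists>\<tau>s\<in>strategies B.
        (\<forall>\<tau>\<in>strategies B. escape_rate d T \<sigma>s \<tau> x0 \<le> ereal (r + \<epsilon>)) \<and>
        (\<forall>\<sigma>\<in>strategies A. escape_rate d T \<sigma> \<tau>s x0 \<ge> ereal (r - \<epsilon>)))"

text \<open>Standing assumption (under which the value exists).\<close>
definition standing_assumption :: "('x \<Rightarrow> 'x \<Rightarrow> real) \<Rightarrow> ('e::metric_space \<Rightarrow> 'e \<Rightarrow> 'x \<Rightarrow> 'x) \<Rightarrow> 'e set \<Rightarrow> 'e set \<Rightarrow> bool" where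
  "standing_assumption d T A B \<longleftrightarrow>
     (\<forall>x. \<forall>b\<in>B. continuous_map (top_of_set A) (hemi_topology d) (\<lambda>a. T a b x)) \<and>
     (\<forall>x. \<forall>a\<in>A. continuous_map (top_of_set B) (hemi_topology d) (\<lambda>b. T a b x)) \<and>
     (\<forall>K. compactin (hemi_topology d) K \<longrightarrow>
          compactin (hemi_topology d) {T a b x | a b x. a \<in> A \<and> b \<in> B \<and> x \<in> K})"

end

theory Submission imports Defs begin
lemma near: fixes S :: "'e::metric_space set"
  assumes "compact S" "S \<noteq> {}" shows "\<exists>s\<in>S. dist a s = infdist a S"
proof -
  obtain x where x: "x \<in> S" "\<And>y. y\<in>S \<Longrightarrow> dist a x \<le> dist a y"
    proof -
    have "continuous_on S (dist a)" by (intro continuous_intros)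
    then show ?thesis using continuous_attains_inf[OF assms, of "dist a"] that by blast
  qed
  have "infdist a S \<le> dist a x" using x(1) by (rule infdist_le)
  moreover have "dist a x \<le> infdist a S" using x assms(2) by (simp add: infdist_notempty cINF_greatest)
  ultimately show ?thesis using x by force
qed
lemma hd1: fixes A :: "'e::metric_space set"
  assumes "compact A" "a \<in> A" shows "infdist a B \<le> hausdorff_dist A B"
proof -
  have "compact ((\<lambda>a. infdist a B) ` A)"
    by (rule compact_continuous_image[OF _ assms(1)]) (auto intro: continuous_intros)
  then have "bdd_above ((\<lambda>a. infdist a B) ` A)" by (meson bounded_imp_bdd_above compact_imp_bounded)
  then have "infdist a B \<le> (SUP a\<in>A. infdist a B)" using assms(2) by (rule cSUP_upper2) simp
  then show ?thesis unfolding hausdorff_dist_def by linarith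
qed
lemma hd2: fixes A :: "'e::metric_space set"
  assumes "compact B" "b \<in> B" shows "infdist b A \<le> hausdorff_dist A B"
  using hd1[OF assms, of A] unfolding hausdorff_dist_def by linarith
fun coup :: "('e \<Rightarrow> 'e \<Rightarrow> 'x \<Rightarrow> 'x) \<Rightarrow> ('e \<Rightarrow> 'e \<Rightarrow> 'x \<Rightarrow> 'x) \<Rightarrow> ('x,'e) strategy \<Rightarrow> ('x,'e) strategy
  \<Rightarrow> ('e \<Rightarrow> 'e) \<Rightarrow> ('e \<Rightarrow> 'e) \<Rightarrow> 'x \<Rightarrow> 'x \<Rightarrow> nat \<Rightarrow> ('x list \<times> 'e list \<times> 'e list) \<times> ('x list \<times> 'e list \<times> 'e list)" where
  "coup T T' \<sigma> \<tau>' pa pb x0 x0' 0 = (([x0],[],[]),([x0'],[],[]))"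
| "coup T T' \<sigma> \<tau>' pa pb x0 x0' (Suc k) =
    (let ((xs,as,bs),(ys,as',bs')) = coup T T' \<sigma> \<tau>' pa pb x0 x0' k;
         a = \<sigma> xs as bs; a' = pa a; b' = \<tau>' ys (as'@[a']) bs'; b = pb b'
     in ((xs@[T a b (last xs)], as@[a], bs@[b]), (ys@[T' a' b' (last ys)], as'@[a'], bs'@[b'])))"

lemma coup_len:
  assumes "coup T T' \<sigma> \<tau>' pa pb x0 x0' k = ((xs,as,bs),(ys,as',bs'))"
  shows "length as = k \<and> length bs = k \<and> length as' = k \<and> length bs' = k \<and> xs \<noteq> [] \<and> ys \<noteq> []"
  using assms
proof (induction k arbitrary: xs as bs ys as' bs')
  case 0 then show ?case by auto
next
  case (Suc k)
  obtain xs0 as0 bs0 ys0 as0' bs0' where e: "coup T T' \<sigma> \<tau>' pa pb x0 x0' k = ((xs0,as0,bs0),(ys0,as0',bs0'))"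
    by (metis prod.exhaust)
  show ?case using Suc.prems Suc.IH[OF e] e by (auto simp: Let_def)
qed

lemma coup_Suc:
  assumes "coup T T' \<sigma> \<tau>' pa pb x0 x0' k = ((xs,as,bs),(ys,as',bs'))"
  shows "coup T T' \<sigma> \<tau>' pa pb x0 x0' (Suc k) =
     ((xs@[T (\<sigma> xs as bs) (pb (\<tau>' ys (as'@[pa (\<sigma> xs as bs)]) bs')) (last xs)], as@[\<sigma> xs as bs], bs@[pb (\<tau>' ys (as'@[pa (\<sigma> xs as bs)]) bs')]),
      (ys@[T' (pa (\<sigma> xs as bs)) (\<tau>' ys (as'@[pa (\<sigma> xs as bs)]) bs') (last ys)], as'@[pa (\<sigma> xs as bs)], bs'@[\<tau>' ys (as'@[pa (\<sigma> xs as bs)]) bs']))"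
  using assms by (simp add: Let_def)

lemma coup_play1:
  "play T \<sigma> (\<lambda>xs as bs. last (snd (snd (fst (coup T T' \<sigma> \<tau>' pa pb x0 x0' (Suc (length bs))))))) x0 k
   = fst (coup T T' \<sigma> \<tau>' pa pb x0 x0' k)"
proof (induction k)
  case 0 then show ?case by simp
next
  case (Suc k)
  obtain xs as bs ys as' bs' where e: "coup T T' \<sigma> \<tau>' pa pb x0 x0' k = ((xs,as,bs),(ys,as',bs'))"
    by (metis prod.exhaust)
  note l = coup_len[OF e]
  show ?case using Suc.IH e l by (simp add: coup_Suc[OF e] Let_def)
qed

lemma coup_play2:
  "play T' (\<lambda>xs as bs. last (fst (snd (snd (coup T T' \<sigma> \<tau>' pa pb x0 x0' (Suc (length as))))))) \<tau>' x0' k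
   = snd (coup T T' \<sigma> \<tau>' pa pb x0 x0' k)"
proof (induction k)
  case 0 then show ?case by simp
next
  case (Suc k)
  obtain xs as bs ys as' bs' where e: "coup T T' \<sigma> \<tau>' pa pb x0 x0' k = ((xs,as,bs),(ys,as',bs'))"
    by (metis prod.exhaust)
  note l = coup_len[OF e]
  show ?case using Suc.IH e l by (simp add: coup_Suc[OF e] Let_def)
qed

lemma coup_dist:
  assumes hm: "hemi_metric d" and ne: "nonexpansive_family d T'"
    and st: "\<And>xs as bs ys as' bs' x. d (T' (pa (\<sigma> xs as bs)) (\<tau>' ys (as'@[pa (\<sigma> xs as bs)]) bs') x)
               (T (\<sigma> xs as bs) (pb (\<tau>' ys (as'@[pa (\<sigma> xs as bs)]) bs')) x) \<le> M"
  shows "coup T T' \<sigma> \<tau>' pa pb x0 x0' k = ((xs,as,bs),(ys,as',bs')) \<Longrightarrow> d (last ys) (last xs) \<le> d x0' x0 + real k * M"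
proof (induction k arbitrary: xs as bs ys as' bs')
  case 0 then show ?case by auto
next
  case (Suc k)
  obtain xs0 as0 bs0 ys0 as0' bs0' where e: "coup T T' \<sigma> \<tau>' pa pb x0 x0' k = ((xs0,as0,bs0),(ys0,as0',bs0'))"
    by (metis prod.exhaust)
  define a where "a = \<sigma> xs0 as0 bs0"
  define b' where "b' = \<tau>' ys0 (as0'@[pa a]) bs0'"
  have eq: "xs = xs0 @ [T a (pb b') (last xs0)]" "ys = ys0 @ [T' (pa a) b' (last ys0)]"
    using Suc.prems coup_Suc[OF e] by (auto simp: a_def b'_def)
  have tri: "d (T' (pa a) b' (last ys0)) (T a (pb b') (last xs0)) \<le>
     d (T' (pa a) b' (last ys0)) (T' (pa a) b' (last xs0)) + d (T' (pa a) b' (last xs0)) (T a (pb b') (last xs0))"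
    using hm unfolding hemi_metric_def by blast
  have "d (T' (pa a) b' (last ys0)) (T' (pa a) b' (last xs0)) \<le> d (last ys0) (last xs0)"
    using ne unfolding nonexpansive_family_def by blast
  moreover have "d (T' (pa a) b' (last xs0)) (T a (pb b') (last xs0)) \<le> M"
    using st unfolding a_def b'_def by blast
  moreover note Suc.IH[OF e]
  ultimately show ?case using tri eq by (simp add: algebra_simps)
qed

lemma one_dir:
  fixes d :: "'x \<Rightarrow> 'x \<Rightarrow> real"
    and T T' :: "'e::metric_space \<Rightarrow> 'e \<Rightarrow> 'x \<Rightarrow> 'x"
  assumes hm: "hemi_metric d" and ne': "nonexpansive_family d T'"
    and L: "L \<ge> 0"
    and cond: "\<And>a b a' b' x. dsym d (T a b x) (T' a' b' x) \<le> L * (dist a a' + dist b b') + \<epsilon>"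
    and cA: "compact A" and cA': "compact A'" "A' \<noteq> {}"
    and cB: "compact B" "B \<noteq> {}" and cB': "compact B'"
    and v: "game_has_value d T A B x0 r"
    and v': "game_has_value d T' A' B' x0' r'"
  shows "r' \<le> r + (L * (hausdorff_dist A A' + hausdorff_dist B B') + \<epsilon>)"
proof (rule field_le_epsilon)
  fix e :: real assume "e > 0"
  define \<eta> where "\<eta> = e / 2"
  have "\<eta> > 0" using \<open>e > 0\<close> by (simp add: \<eta>_def)
  define M where "M = L * (hausdorff_dist A A' + hausdorff_dist B B') + \<epsilon>"
  obtain \<sigma> where \<sigma>: "\<sigma> \<in> strategies A" "\<And>\<tau>. \<tau> \<in> strategies B \<Longrightarrow> escape_rate d T \<sigma> \<tau> x0 \<le> ereal (r + \<eta>)"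
    using v \<open>\<eta> > 0\<close> unfolding game_has_value_def by blast
  obtain \<tau>' where \<tau>': "\<tau>' \<in> strategies B'" "\<And>\<sigma>. \<sigma> \<in> strategies A' \<Longrightarrow> escape_rate d T' \<sigma> \<tau>' x0' \<ge> ereal (r' - \<eta>)"
    using v' \<open>\<eta> > 0\<close> unfolding game_has_value_def by blast
  define pa where "pa = (\<lambda>a. SOME a'. a' \<in> A' \<and> dist a a' = infdist a A')"
  define pb where "pb = (\<lambda>b'. SOME b. b \<in> B \<and> dist b' b = infdist b' B)"
  have pa: "pa a \<in> A' \<and> dist a (pa a) = infdist a A'" for a
    unfolding pa_def by (rule someI_ex) (use near[OF cA'] in blast)
  have pb: "pb b \<in> B \<and> dist b (pb b) = infdist b B" for b
    unfolding pb_def by (rule someI_ex) (use near[OF cB] in blast)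
  let ?C = "coup T T' \<sigma> \<tau>' pa pb x0 x0'"
  define \<tau> :: "('x,'e) strategy" where "\<tau> = (\<lambda>xs as bs. last (snd (snd (fst (?C (Suc (length bs)))))))"
  define \<sigma>' :: "('x,'e) strategy" where "\<sigma>' = (\<lambda>xs as bs. last (fst (snd (snd (?C (Suc (length as)))))))"
  have p1: "play T \<sigma> \<tau> x0 k = fst (?C k)" for k unfolding \<tau>_def by (rule coup_play1)
  have p2: "play T' \<sigma>' \<tau>' x0' k = snd (?C k)" for k unfolding \<sigma>'_def by (rule coup_play2)
  have \<tau>S: "\<tau> \<in> strategies B"
  proof -
    have "last (snd (snd (fst (?C (Suc n))))) \<in> B" for n
    proof -
      obtain xs as bs ys as' bs' where e: "?C n = ((xs,as,bs),(ys,as',bs'))" by (metis prod.exhaust)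
      show ?thesis using coup_Suc[OF e] pb by simp
    qed
    then show ?thesis unfolding strategies_def \<tau>_def by blast
  qed
  have \<sigma>'S: "\<sigma>' \<in> strategies A'"
  proof -
    have "last (fst (snd (snd (?C (Suc n))))) \<in> A'" for n
    proof -
      obtain xs as bs ys as' bs' where e: "?C n = ((xs,as,bs),(ys,as',bs'))" by (metis prod.exhaust)
      show ?thesis using coup_Suc[OF e] pa by simp
    qed
    then show ?thesis unfolding strategies_def \<sigma>'_def by blast
  qed
  have st: "d (T' (pa (\<sigma> xs as bs)) (\<tau>' ys (as'@[pa (\<sigma> xs as bs)]) bs') x)
               (T (\<sigma> xs as bs) (pb (\<tau>' ys (as'@[pa (\<sigma> xs as bs)]) bs')) x) \<le> M" for xs as bs ys as' bs' x
  proof -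
    define a where "a = \<sigma> xs as bs"
    define b' where "b' = \<tau>' ys (as'@[pa a]) bs'"
    have aA: "a \<in> A" using \<sigma>(1) unfolding strategies_def a_def by blast
    have bB: "b' \<in> B'" using \<tau>'(1) unfolding strategies_def b'_def by blast
    have d1: "dist a (pa a) \<le> hausdorff_dist A A'" using pa hd1[OF cA aA] by simp
    have d2: "dist (pb b') b' \<le> hausdorff_dist B B'" using pb hd2[OF cB' bB] by (simp add: dist_commute)
    have "d (T' (pa a) b' x) (T a (pb b') x) \<le> dsym d (T a (pb b') x) (T' (pa a) b' x)"
      unfolding dsym_def by simp
    also have "\<dots> \<le> L * (dist a (pa a) + dist (pb b') b') + \<epsilon>" by (rule cond)
    also have "\<dots> \<le> M" unfolding M_def using d1 d2 L by (simp add: mult_left_mono)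
    finally show ?thesis unfolding a_def b'_def .
  qed
  define x where "x k = state T \<sigma> \<tau> x0 k" for k
  define y where "y k = state T' \<sigma>' \<tau>' x0' k" for k
  have dk: "d (y k) (x k) \<le> d x0' x0 + real k * M" for k
  proof -
    obtain xs as bs ys as' bs' where e: "?C k = ((xs,as,bs),(ys,as',bs'))" by (metis prod.exhaust)
    show ?thesis using coup_dist[OF hm ne' st e] e p1 p2 unfolding x_def y_def state_def by simp
  qed
  define c where "c = d x0' x0 + d x0 x0'"
  have bound: "d (y k) x0' \<le> d (x k) x0 + c + real k * M" for k
  proof -
    have "d (y k) x0' \<le> d (y k) (x k) + d (x k) x0'" using hm unfolding hemi_metric_def by blast
    moreover have "d (x k) x0' \<le> d (x k) x0 + d x0 x0'" using hm unfolding hemi_metric_def by blast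
    ultimately show ?thesis using dk[of k] unfolding c_def by linarith
  qed
  have ev: "eventually (\<lambda>k. ereal (d (y k) x0' / real k) \<le> ereal (c / real k + M) + ereal (d (x k) x0 / real k)) sequentially"
    unfolding eventually_sequentially
  proof (intro exI allI impI)
    fix k :: nat assume "k \<ge> 1"
    then have kp: "real k > 0" by simp
    have "d (y k) x0' / real k \<le> (d (x k) x0 + c + real k * M) / real k"
      using bound[of k] kp by (simp add: divide_right_mono)
    also have "\<dots> = c / real k + M + d (x k) x0 / real k" using kp by (simp add: field_simps)
    finally show "ereal (d (y k) x0' / real k) \<le> ereal (c / real k + M) + ereal (d (x k) x0 / real k)" by simp
  qed
  have lim: "(\<lambda>k. ereal (c / real k + M)) \<longlonglongrightarrow> ereal M"
  proof -
    have "(\<lambda>k. c / real k + M) \<longlonglongrightarrow> 0 + M" by (intro tendsto_add lim_const_over_n tendsto_const)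
    then show ?thesis by (simp add: tendsto_ereal)
  qed
  have "escape_rate d T' \<sigma>' \<tau>' x0' \<le> limsup (\<lambda>k. ereal (c / real k + M) + ereal (d (x k) x0 / real k))"
    unfolding escape_rate_def y_def[symmetric] using ev by (rule Limsup_mono)
  also have "\<dots> = ereal M + escape_rate d T \<sigma> \<tau> x0"
    unfolding escape_rate_def x_def by (rule ereal_limsup_lim_add[OF lim]) simp
  also have "\<dots> \<le> ereal M + ereal (r + \<eta>)" using \<sigma>(2)[OF \<tau>S] by (rule add_left_mono)
  finally have "escape_rate d T' \<sigma>' \<tau>' x0' \<le> ereal (M + (r + \<eta>))" by simp
  with \<tau>'(2)[OF \<sigma>'S] have "ereal (r' - \<eta>) \<le> ereal (M + (r + \<eta>))" by (rule order_trans)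
  then show "r' \<le> r + M + e" unfolding \<eta>_def by simp
qed

theorem theorem3:
  fixes d :: "'x \<Rightarrow> 'x \<Rightarrow> real"
    and T T' :: "'e::metric_space \<Rightarrow> 'e \<Rightarrow> 'x \<Rightarrow> 'x"
    and \<epsilon> L :: real
    and A A' B B' :: "'e set"
    and x0 x0' :: 'x
    and r r' :: real
  assumes "hemi_metric d"
    and "nonexpansive_family d T" and "nonexpansive_family d T'"
    and "\<epsilon> \<ge> 0" and "L > 0"
    and "\<And>a b a' b' x. dsym d (T a b x) (T' a' b' x) \<le> L * (dist a a' + dist b b') + \<epsilon>"
    and "compact A" "A \<noteq> {}" "compact A'" "A' \<noteq> {}"
    and "compact B" "B \<noteq> {}" "compact B'" "B' \<noteq> {}"
    and "standing_assumption d T A B" and "standing_assumption d T' A' B'"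
    and "game_has_value d T A B x0 r"
    and "game_has_value d T' A' B' x0' r'"
  shows "\<bar>r - r'\<bar> \<le> L * (hausdorff_dist A A' + hausdorff_dist B B') + \<epsilon>"
proof -
  have c2: "dsym d (T' a b x) (T a' b' x) \<le> L * (dist a a' + dist b b') + \<epsilon>" for a b a' b' x
    using assms(6)[of a' b' x a b] by (simp add: dsym_def max.commute dist_commute add.commute)
  have h: "hausdorff_dist X Y = hausdorff_dist Y X" for X Y :: "'e set"
    unfolding hausdorff_dist_def by (simp add: max.commute)
  have "r' \<le> r + (L * (hausdorff_dist A A' + hausdorff_dist B B') + \<epsilon>)"
    by (rule one_dir) (use assms in auto)
  moreover have "r \<le> r' + (L * (hausdorff_dist A' A + hausdorff_dist B' B) + \<epsilon>)"
    by (rule one_dir[OF assms(1) assms(2) _ c2]) (use assms in auto)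
  then have "r \<le> r' + (L * (hausdorff_dist A A' + hausdorff_dist B B') + \<epsilon>)"
    using h[of A A'] h[of B B'] by simp
  ultimately show ?thesis unfolding abs_le_iff by linarith
qed

end
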